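(* Let $k$ be a positive integer, $q\in\mathbb C\setminus\{0\}$, and let $\nu_1,\dots,\nu_k$ be commuting variables; work in the commutative algebra obtained from $\mathbb C[\nu_1,\dots,\nu_k]$ by inverting all differences $\nu_{r_1}-\nu_{r_2}$, $1\le r_1<r_2\le k$. Let $e_i:=e_i(\nu_1,\dots,\nu_k)$ for $0\le i\le k$ and $e_i:=0$ for $i>k$, and define $\mathfrak p'_1,\mathfrak p'_2,\dots$ recursively by $$\sum_{i=0}^{m-1}(-q)^ie_i\,\mathfrak p'_{m-i}=(-1)^{m-1}m_q\,e_m,\qquad m=1,2,\dots.$$ Then, with $\delta_j:=\prod_{r=1,\,r\ne j}^{k}\frac{\nu_j-q^{-2}\nu_r}{\nu_j-\nu_r}$, $$\mathfrak p'_i=q^{i-1}\sum_{j=1}^k\delta_j\,\nu_j^{\,i}\quad (i=1,2,\dots),\qquad\text{and}\qquad q^{-1}\sum_{j=1}^k\delta_j=q^{-k}k_q.$$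
   Context: $e_i(\nu_1,\dots,\nu_k)$ is the $i$-th elementary symmetric polynomial ($e_0=1$). For an integer $m\ge0$, $m_q:=q^{m-1}+q^{m-3}+\dots+q^{1-m}$. *)

theory Defs
  imports Complex_Main
begin

definition esym :: "nat \<Rightarrow> (nat \<Rightarrow> complex) \<Rightarrow> nat \<Rightarrow> complex" where
  "esym k \<nu> i = (\<Sum>S\<in>{S. S \<subseteq> {1..k} \<and> card S = i}. \<Prod>r\<in>S. \<nu> r)"

definition qint :: "complex \<Rightarrow> nat \<Rightarrow> complex" where
  "qint q m = (\<Sum>j<m. q powi (int m - 1 - 2 * int j))"

definition delta :: "nat \<Rightarrow> complex \<Rightarrow> (nat \<Rightarrow> complex) \<Rightarrow> nat \<Rightarrow> complex" where
  "delta k q \<nu> j = (\<Prod>r\<in>{1..k} - {j}. (\<nu> j - q powi (-2) * \<nu> r) / (\<nu> j - \<nu> r))"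

end

theory Submission
  imports Defs
begin

lemma vanish:
  fixes C :: "nat \<Rightarrow> complex"
  assumes "finite X" "card X > n" "\<forall>x\<in>X. (\<Sum>s\<le>n. C s * x^(n-s)) = 0"
  shows "\<forall>s\<le>n. C s = 0"
proof (rule ccontr)
  assume "\<not> (\<forall>s\<le>n. C s = 0)"
  then obtain s where s: "s \<le> n" "C s \<noteq> 0" by auto
  define c where "c i = C (n - i)" for i
  have eq: "(\<Sum>i\<le>n. c i * x^i) = (\<Sum>s\<le>n. C s * x^(n-s))" for x :: complex
  proof -
    have "(\<Sum>i\<le>n. c i * x^i) = (\<Sum>i<Suc n. (\<lambda>i. c i * x^i) (Suc n - Suc i))"
      unfolding lessThan_Suc_atMost[symmetric] by (rule sum.nat_diff_reindex[symmetric])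
    also have "\<dots> = (\<Sum>s\<le>n. C s * x^(n-s))"
      unfolding lessThan_Suc_atMost by (rule sum.cong) (auto simp: c_def)
    finally show ?thesis .
  qed
  have cn: "c (n - s) \<noteq> 0" "n - s \<le> n" using s by (auto simp: c_def)
  have "card {z. (\<Sum>i\<le>n. c i * z^i) = 0} \<le> n" "finite {z. (\<Sum>i\<le>n. c i * z^i) = 0}"
    using polyfun_roots_card[of c "n-s" n] polyfun_roots_finite[of c "n-s" n] cn by auto
  moreover have "X \<subseteq> {z. (\<Sum>i\<le>n. c i * z^i) = 0}" using assms(3) eq by auto
  ultimately have "card X \<le> n" by (meson card_mono order_trans)
  then show False using assms(2) by simp
qed

definition eA :: "nat set \<Rightarrow> (nat \<Rightarrow> complex) \<Rightarrow> nat \<Rightarrow> complex" where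
  "eA A \<nu> i = (\<Sum>S\<in>{S. S \<subseteq> A \<and> card S = i}. \<Prod>r\<in>S. \<nu> r)"

lemma eA_0: "finite A \<Longrightarrow> eA A \<nu> 0 = 1"
proof -
  assume "finite A"
  then have "{S. S \<subseteq> A \<and> card S = 0} = {{}}"
  proof (intro equalityI subsetI)
    fix S assume "S \<in> {S. S \<subseteq> A \<and> card S = 0}"
    then have "S \<subseteq> A" "card S = 0" by auto
    moreover have "finite S" using \<open>S \<subseteq> A\<close> \<open>finite A\<close> finite_subset by blast
    ultimately show "S \<in> {{}}" by simp
  qed simp
  then show ?thesis by (simp add: eA_def)
qed

lemma eA_big: "finite A \<Longrightarrow> card A < i \<Longrightarrow> eA A \<nu> i = 0"
proof -
  assume "finite A" "card A < i"
  have "\<not> (S \<subseteq> A \<and> card S = i)" for S using card_mono[OF \<open>finite A\<close>, of S] \<open>card A < i\<close> by auto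
  then have E: "{S. S \<subseteq> A \<and> card S = i} = {}" by blast
  show ?thesis unfolding eA_def E by simp
qed

lemma eA_insert_Suc:
  assumes "finite A" "j \<notin> A"
  shows "eA (insert j A) \<nu> (Suc s) = eA A \<nu> (Suc s) + \<nu> j * eA A \<nu> s"
proof -
  let ?X = "{S. S \<subseteq> A \<and> card S = Suc s}" and ?Y = "{S. S \<subseteq> A \<and> card S = s}"
  have split: "{S. S \<subseteq> insert j A \<and> card S = Suc s} = ?X \<union> insert j ` ?Y"
  proof (intro equalityI subsetI)
    fix S assume "S \<in> {S. S \<subseteq> insert j A \<and> card S = Suc s}"
    then have S: "S \<subseteq> insert j A" "card S = Suc s" by auto
    have fS: "finite S" using S(1) assms(1) finite_subset by blast
    show "S \<in> ?X \<union> insert j ` ?Y"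
    proof (cases "j \<in> S")
      case True
      have "S - {j} \<in> ?Y" using S fS True by auto
      moreover have "S = insert j (S - {j})" using True by auto
      ultimately show ?thesis by blast
    next
      case False
      then show ?thesis using S by auto
    qed
  next
    fix S assume "S \<in> ?X \<union> insert j ` ?Y"
    then show "S \<in> {S. S \<subseteq> insert j A \<and> card S = Suc s}"
    proof
      assume "S \<in> ?X" then show ?thesis by auto
    next
      assume "S \<in> insert j ` ?Y"
      then obtain T where T: "T \<subseteq> A" "card T = s" "S = insert j T" by auto
      have "finite T" using T(1) assms(1) finite_subset by blast
      moreover have "j \<notin> T" using T(1) assms(2) by auto
      ultimately show ?thesis using T by auto
    qed
  qed
  have fin: "finite ?X" "finite (insert j ` ?Y)" using assms(1) by auto
  have disj: "?X \<inter> insert j ` ?Y = {}" using assms(2) by auto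
  have inj: "inj_on (insert j) ?Y" unfolding inj_on_def using assms(2) by (metis (mono_tags) insert_ident mem_Collect_eq subsetD)
  have "eA (insert j A) \<nu> (Suc s) = (\<Sum>S\<in>?X. \<Prod>r\<in>S. \<nu> r) + (\<Sum>S\<in>insert j ` ?Y. \<Prod>r\<in>S. \<nu> r)"
    unfolding eA_def split by (rule sum.union_disjoint[OF fin disj])
  also have "(\<Sum>S\<in>insert j ` ?Y. \<Prod>r\<in>S. \<nu> r) = (\<Sum>T\<in>?Y. \<Prod>r\<in>insert j T. \<nu> r)"
    by (rule sum.reindex[OF inj, unfolded comp_def])
  also have "\<dots> = (\<Sum>T\<in>?Y. \<nu> j * (\<Prod>r\<in>T. \<nu> r))"
  proof (rule sum.cong)
    fix T assume "T \<in> ?Y"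
    then have "finite T" "j \<notin> T" using assms finite_subset by auto
    then show "(\<Prod>r\<in>insert j T. \<nu> r) = \<nu> j * (\<Prod>r\<in>T. \<nu> r)" by simp
  qed simp
  finally show ?thesis by (simp add: eA_def sum_distrib_left)
qed

lemma eA_insert:
  assumes "finite A" "j \<notin> A"
  shows "eA (insert j A) \<nu> s = eA A \<nu> s + (if s = 0 then 0 else \<nu> j * eA A \<nu> (s - 1))"
  using assms eA_insert_Suc[OF assms] eA_0 by (cases s) auto

lemma shift_sum:
  fixes g h :: "nat \<Rightarrow> complex"
  assumes "g 0 = 0" "h n = 0" "\<And>t. g (Suc t) = h t"
  shows "(\<Sum>s\<le>n. g s) = (\<Sum>t\<le>n. h t)"
proof -
  have "(\<Sum>s\<le>n. g s) = (\<Sum>s\<le>Suc n. g s)" using assms by simp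
  also have "\<dots> = g 0 + (\<Sum>t\<le>n. g (Suc t))" by (rule sum.atMost_Suc_shift)
  finally show ?thesis using assms by simp
qed

lemma vieta:
  assumes "finite A"
  shows "(\<Prod>r\<in>A. x - c * \<nu> r) = (\<Sum>s\<le>card A. (-c)^s * eA A \<nu> s * x^(card A - s))"
  using assms
proof (induction A rule: finite_induct)
  case empty
  then show ?case by (simp add: eA_0)
next
  case (insert j A)
  let ?n = "card A"
  let ?e = "eA A \<nu>"
  have cn: "card (insert j A) = Suc ?n" using insert by simp
  have "(\<Sum>s\<le>card (insert j A). (-c)^s * eA (insert j A) \<nu> s * x^(card (insert j A) - s))
     = (\<Sum>s\<le>Suc ?n. (-c)^s * ?e s * x^(Suc ?n - s))
       + (\<Sum>s\<le>Suc ?n. (if s = 0 then 0 else (-c)^s * (\<nu> j * ?e (s - 1)) * x^(Suc ?n - s)))"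
    unfolding cn sum.distrib[symmetric] by (rule sum.cong) (auto simp: eA_insert[OF insert(1,2)] algebra_simps)
  also have "(\<Sum>s\<le>Suc ?n. (-c)^s * ?e s * x^(Suc ?n - s)) = x * (\<Sum>s\<le>?n. (-c)^s * ?e s * x^(?n - s))"
    using eA_big[OF insert(1), of "Suc ?n"] by (simp add: sum_distrib_left, intro sum.cong refl, simp add: Suc_diff_le)
  also have "(\<Sum>s\<le>Suc ?n. (if s = 0 then 0 else (-c)^s * (\<nu> j * ?e (s - 1)) * x^(Suc ?n - s)))
     = (\<Sum>t\<le>Suc ?n. (-c)^Suc t * (\<nu> j * ?e t) * x^(?n - t))"
    by (rule shift_sum) (use eA_big[OF insert(1), of "Suc ?n"] in auto)
  also have "\<dots> = - c * \<nu> j * (\<Sum>s\<le>?n. (-c)^s * ?e s * x^(?n - s))"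
    using eA_big[OF insert(1), of "Suc ?n"] by (simp add: sum_distrib_left algebra_simps)
  finally show ?case using insert by (simp add: algebra_simps)
qed

definition qn :: "complex \<Rightarrow> nat \<Rightarrow> complex" where "qn a n = (\<Sum>i<n. a^i)"

lemma qn_Suc: "qn a (Suc m) = 1 + a * qn a m"
  unfolding qn_def by (subst sum.lessThan_Suc_shift) (simp add: sum_distrib_left)

lemma qn_0[simp]: "qn a 0 = 0" by (simp add: qn_def)

definition deltaA :: "nat \<Rightarrow> complex \<Rightarrow> (nat \<Rightarrow> complex) \<Rightarrow> nat \<Rightarrow> complex" where
  "deltaA k a \<nu> j = (\<Prod>r\<in>{1..k} - {j}. (\<nu> j - a * \<nu> r) / (\<nu> j - \<nu> r))"

lemma Rlemma:
  assumes "finite A" "j \<notin> A"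
  shows "(\<Sum>s\<le>card A. (-a)^s * qn a (Suc (card A) - s) * eA (insert j A) \<nu> s * \<nu> j^(card A - s))
         = (\<Prod>r\<in>A. \<nu> j - a * \<nu> r)"
proof -
  let ?n = "card A" and ?e = "eA A \<nu>" and ?x = "\<nu> j"
  have "(\<Sum>s\<le>?n. (-a)^s * qn a (Suc ?n - s) * eA (insert j A) \<nu> s * ?x^(?n - s))
     = (\<Sum>s\<le>?n. (-a)^s * qn a (Suc ?n - s) * ?e s * ?x^(?n - s))
     + (\<Sum>s\<le>?n. (if s = 0 then 0 else (-a)^s * qn a (Suc ?n - s) * ?x * ?e (s - 1) * ?x^(?n - s)))"
    unfolding sum.distrib[symmetric] by (rule sum.cong) (auto simp: eA_insert[OF assms] algebra_simps)
  also have "(\<Sum>s\<le>?n. (if s = 0 then 0 else (-a)^s * qn a (Suc ?n - s) * ?x * ?e (s - 1) * ?x^(?n - s)))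
     = (\<Sum>t\<le>?n. (-a)^Suc t * qn a (?n - t) * ?e t * ?x^(?n - t))"
  proof (rule shift_sum)
    fix t
    show "(if Suc t = 0 then 0 else (-a)^Suc t * qn a (Suc ?n - Suc t) * ?x * ?e (Suc t - 1) * ?x^(?n - Suc t))
      = (-a)^Suc t * qn a (?n - t) * ?e t * ?x^(?n - t)"
    proof (cases "t < ?n")
      case True
      then have "?x^(?n - t) = ?x * ?x^(?n - Suc t)"
        by (metis Suc_diff_Suc power_Suc)
      then show ?thesis by simp
    next
      case False
      then show ?thesis by simp
    qed
  qed simp_all
  also have "(\<Sum>s\<le>?n. (-a)^s * qn a (Suc ?n - s) * ?e s * ?x^(?n - s))
     + (\<Sum>t\<le>?n. (-a)^Suc t * qn a (?n - t) * ?e t * ?x^(?n - t))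
     = (\<Sum>s\<le>?n. (-a)^s * ?e s * ?x^(?n - s))"
    unfolding sum.distrib[symmetric]
  proof (rule sum.cong)
    fix s assume "s \<in> {..?n}"
    then have "Suc ?n - s = Suc (?n - s)" by auto
    then show "(-a)^s * qn a (Suc ?n - s) * ?e s * ?x^(?n - s) + (-a)^Suc s * qn a (?n - s) * ?e s * ?x^(?n - s)
       = (-a)^s * ?e s * ?x^(?n - s)"
      by (simp add: qn_Suc algebra_simps)
  qed simp
  also have "\<dots> = (\<Prod>r\<in>A. ?x - a * \<nu> r)" using vieta[OF assms(1)] by simp
  finally show ?thesis .
qed

lemma Ulemma:
  assumes k1: "k \<ge> 1" and inj: "inj_on \<nu> {1..k}"
  shows "(\<Sum>j=1..k. deltaA k a \<nu> j * eA ({1..k}-{j}) \<nu> s) = a^s * qn a (k-s) * eA {1..k} \<nu> s"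
proof (cases "s < k")
  case False
  have "eA ({1..k}-{j}) \<nu> s = 0" if "j \<in> {1..k}" for j
    by (rule eA_big) (use that False in auto)
  then show ?thesis using False by simp
next
  case True
  define C where "C s = (-1)^s * (\<Sum>j=1..k. deltaA k a \<nu> j * eA ({1..k}-{j}) \<nu> s)
      - (-a)^s * qn a (k-s) * eA {1..k} \<nu> s" for s
  have cardj: "card ({1..k}-{j}) = k - 1" if "j \<in> {1..k}" for j using that by simp
  have "\<forall>x\<in>\<nu> ` {1..k}. (\<Sum>s\<le>k-1. C s * x^(k-1-s)) = 0"
  proof
    fix x assume "x \<in> \<nu> ` {1..k}"
    then obtain j0 where j0: "j0 \<in> {1..k}" "x = \<nu> j0" by auto
    have ins: "{1..k} = insert j0 ({1..k} - {j0})" using j0 by auto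
    have A: "(\<Sum>s\<le>k-1. (-1)^s * (\<Sum>j=1..k. deltaA k a \<nu> j * eA ({1..k}-{j}) \<nu> s) * x^(k-1-s))
       = (\<Sum>j=1..k. deltaA k a \<nu> j * (\<Prod>r\<in>{1..k}-{j}. x - 1 * \<nu> r))"
    proof -
      have "(\<Sum>s\<le>k-1. (-1)^s * (\<Sum>j=1..k. deltaA k a \<nu> j * eA ({1..k}-{j}) \<nu> s) * x^(k-1-s))
         = (\<Sum>j=1..k. deltaA k a \<nu> j * (\<Sum>s\<le>k-1. (-1)^s * eA ({1..k}-{j}) \<nu> s * x^(k-1-s)))"
      proof -
        have "(\<Sum>s\<le>k-1. (-1)^s * (\<Sum>j=1..k. deltaA k a \<nu> j * eA ({1..k}-{j}) \<nu> s) * x^(k-1-s))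
           = (\<Sum>s\<le>k-1. \<Sum>j=1..k. deltaA k a \<nu> j * ((-1)^s * eA ({1..k}-{j}) \<nu> s * x^(k-1-s)))"
          by (rule sum.cong[OF refl]) (simp add: sum_distrib_left sum_distrib_right mult_ac)
        also have "\<dots> = (\<Sum>j=1..k. \<Sum>s\<le>k-1. deltaA k a \<nu> j * ((-1)^s * eA ({1..k}-{j}) \<nu> s * x^(k-1-s)))"
          by (rule sum.swap)
        finally show ?thesis by (simp add: sum_distrib_left)
      qed
      also have "\<dots> = (\<Sum>j=1..k. deltaA k a \<nu> j * (\<Prod>r\<in>{1..k}-{j}. x - 1 * \<nu> r))"
      proof (rule sum.cong[OF refl])
        fix j assume j: "j \<in> {1..k}"
        have V: "(\<Prod>r\<in>{1..k}-{j}. x - 1 * \<nu> r) = (\<Sum>s\<le>card ({1..k}-{j}). (-1)^s * eA ({1..k}-{j}) \<nu> s * x^(card ({1..k}-{j}) - s))"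
          by (rule vieta) simp
        show "deltaA k a \<nu> j * (\<Sum>s\<le>k-1. (-1)^s * eA ({1..k}-{j}) \<nu> s * x^(k-1-s))
          = deltaA k a \<nu> j * (\<Prod>r\<in>{1..k}-{j}. x - 1 * \<nu> r)"
          unfolding V cardj[OF j] ..
      qed
      finally show ?thesis .
    qed
    have B: "(\<Sum>j=1..k. deltaA k a \<nu> j * (\<Prod>r\<in>{1..k}-{j}. x - 1 * \<nu> r))
       = deltaA k a \<nu> j0 * (\<Prod>r\<in>{1..k}-{j0}. x - \<nu> r)"
    proof -
      have "(\<Sum>j=1..k. deltaA k a \<nu> j * (\<Prod>r\<in>{1..k}-{j}. x - 1 * \<nu> r))
          = (\<Sum>j\<in>{j0}. deltaA k a \<nu> j * (\<Prod>r\<in>{1..k}-{j}. x - 1 * \<nu> r))"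
        by (rule sum.mono_neutral_right) (use j0 in auto)
      then show ?thesis by simp
    qed
    have nz: "\<nu> j0 - \<nu> r \<noteq> 0" if "r \<in> {1..k}-{j0}" for r
    proof
      assume "\<nu> j0 - \<nu> r = 0"
      then have "\<nu> j0 = \<nu> r" by simp
      then have "j0 = r" using inj_onD[OF inj] j0(1) that by blast
      then show False using that by simp
    qed
    have B2: "deltaA k a \<nu> j0 * (\<Prod>r\<in>{1..k}-{j0}. x - \<nu> r) = (\<Prod>r\<in>{1..k}-{j0}. x - a * \<nu> r)"
      unfolding deltaA_def j0(2) prod.distrib[symmetric] by (rule prod.cong) (use nz in auto)
    have R: "(\<Sum>s\<le>k-1. (-a)^s * qn a (k-s) * eA {1..k} \<nu> s * x^(k-1-s)) = (\<Prod>r\<in>{1..k}-{j0}. x - a * \<nu> r)"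
      using Rlemma[of "{1..k}-{j0}" j0 a \<nu>] cardj[OF j0(1)] j0 k1 ins by simp
    have "(\<Sum>s\<le>k-1. C s * x^(k-1-s))
      = (\<Sum>s\<le>k-1. (-1)^s * (\<Sum>j=1..k. deltaA k a \<nu> j * eA ({1..k}-{j}) \<nu> s) * x^(k-1-s))
        - (\<Sum>s\<le>k-1. (-a)^s * qn a (k-s) * eA {1..k} \<nu> s * x^(k-1-s))"
      unfolding C_def sum_subtractf[symmetric] by (simp add: algebra_simps)
    then show "(\<Sum>s\<le>k-1. C s * x^(k-1-s)) = 0" using A B B2 R by simp
  qed
  moreover have "card (\<nu> ` {1..k}) > k - 1" using card_image[OF inj] k1 by simp
  ultimately have "\<forall>s\<le>k-1. C s = 0" by (intro vanish) auto
  then have "C s = 0" using True by auto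
  then have "(-1)^s * ((-1)^s * (\<Sum>j=1..k. deltaA k a \<nu> j * eA ({1..k}-{j}) \<nu> s))
     = (-1)^s * ((-a)^s * qn a (k-s) * eA {1..k} \<nu> s)" unfolding C_def by simp
  moreover have "(-1::complex)^s * (-1)^s = 1" by (simp flip: power_mult_distrib)
  moreover have "(-1::complex)^s * (-a)^s = a^s" by (simp flip: power_mult_distrib)
  ultimately show ?thesis by (metis (no_types, lifting) mult.assoc mult_1)
qed

lemma esym_eA: "esym k \<nu> = eA {1..k} \<nu>"
  by (rule ext) (simp add: esym_def eA_def)

lemma qn_add: "qn a (m + n) = qn a m + a^m * qn a n"
proof (induction m)
  case 0
  then show ?case by simp
next
  case (Suc m)
  have "qn a (Suc m + n) = 1 + a * qn a (m + n)" by (simp only: add_Suc qn_Suc)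
  also have "\<dots> = 1 + a * (qn a m + a^m * qn a n)" by (simp only: Suc.IH)
  also have "\<dots> = qn a (Suc m) + a^Suc m * qn a n" by (simp only: qn_Suc power_Suc distrib_left distrib_right add.assoc mult.assoc)
  finally show ?case .
qed

lemma Xlemma:
  assumes j: "j \<in> {1..k}"
  shows "(\<Sum>i\<le>n. (-1)^i * eA {1..k} \<nu> i * \<nu> j^(Suc n - i))
       = (-1)^n * (eA {1..k} \<nu> (Suc n) - eA ({1..k}-{j}) \<nu> (Suc n))"
proof -
  have ins: "{1..k} = insert j ({1..k}-{j})" using j by auto
  have rec: "eA {1..k} \<nu> (Suc s) = eA ({1..k}-{j}) \<nu> (Suc s) + \<nu> j * eA ({1..k}-{j}) \<nu> s" for s
    by (subst ins, rule eA_insert_Suc) auto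
  show ?thesis
  proof (induction n)
    case 0
    then show ?case using rec[of 0] eA_0[of "{1..k}"] eA_0[of "{1..k}-{j}"] by simp
  next
    case (Suc n)
    have "(\<Sum>i\<le>Suc n. (-1)^i * eA {1..k} \<nu> i * \<nu> j^(Suc (Suc n) - i))
      = \<nu> j * (\<Sum>i\<le>n. (-1)^i * eA {1..k} \<nu> i * \<nu> j^(Suc n - i)) + (-1)^Suc n * eA {1..k} \<nu> (Suc n) * \<nu> j"
    proof -
      have "(\<Sum>i\<le>n. (-1)^i * eA {1..k} \<nu> i * \<nu> j^(Suc (Suc n) - i))
          = \<nu> j * (\<Sum>i\<le>n. (-1)^i * eA {1..k} \<nu> i * \<nu> j^(Suc n - i))"
        unfolding sum_distrib_left
      proof (rule sum.cong[OF refl])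
        fix i assume "i \<in> {..n}"
        then have "Suc (Suc n) - i = Suc (Suc n - i)" by auto
        then show "(-1)^i * eA {1..k} \<nu> i * \<nu> j^(Suc (Suc n) - i) = \<nu> j * ((-1)^i * eA {1..k} \<nu> i * \<nu> j^(Suc n - i))"
          by (simp only: power_Suc mult_ac)
      qed
      then show ?thesis by simp
    qed
    also have "\<dots> = (-1)^Suc n * (eA {1..k} \<nu> (Suc (Suc n)) - eA ({1..k}-{j}) \<nu> (Suc (Suc n)))"
      unfolding Suc.IH using rec[of "Suc n"] by (simp add: algebra_simps)
    finally show ?case .
  qed
qed

lemma qint_qn:
  assumes "q \<noteq> 0" "m \<ge> 1"
  shows "qint q m = q^(m-1) * qn (q powi (-2)) m"
  unfolding qint_def qn_def sum_distrib_left
proof (rule sum.cong[OF refl])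
  fix j
  have e1: "(q powi (-2))^j = q powi (-2 * int j)" by (simp only: power_int_mult power_int_of_nat)
  have e2: "q^(m-1) = q powi (int (m-1))" by (simp only: power_int_of_nat)
  have "q^(m-1) * (q powi (-2))^j = q powi (int (m-1)) * q powi (-2 * int j)"
    by (simp only: e1 e2)
  also have "\<dots> = q powi (int (m-1) + (-2 * int j))" by (rule power_int_add[symmetric]) (use assms in simp)
  also have "int (m-1) + (-2 * int j) = int m - 1 - 2 * int j" using assms by simp
  finally show "q powi (int m - 1 - 2 * int j) = q^(m-1) * (q powi (-2))^j" by simp
qed

theorem lemma6p6:
  fixes k :: nat and q :: complex and \<nu> :: "nat \<Rightarrow> complex" and p :: "nat \<Rightarrow> complex"
  assumes "k \<ge> 1"
    and "q \<noteq> 0"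
    and "inj_on \<nu> {1..k}"
    and rec: "\<And>m. m \<ge> 1 \<Longrightarrow>
      (\<Sum>i=0..m-1. (-q)^i * esym k \<nu> i * p (m - i)) = (-1)^(m-1) * qint q m * esym k \<nu> m"
  shows "(\<forall>i\<ge>1. p i = q^(i-1) * (\<Sum>j=1..k. delta k q \<nu> j * \<nu> j ^ i))
    \<and> q powi (-1) * (\<Sum>j=1..k. delta k q \<nu> j) = q powi (- int k) * qint q k"
proof -
  define a where "a = q powi (-2)"
  have dl: "delta k q \<nu> j = deltaA k a \<nu> j" for j unfolding delta_def deltaA_def a_def ..
  let ?e = "eA {1..k} \<nu>"
  have es: "esym k \<nu> = ?e" by (rule esym_eA)
  have sumd: "(\<Sum>j=1..k. deltaA k a \<nu> j) = qn a k"
    using Ulemma[OF assms(1,3), of a 0] eA_0[of "{1..k}"] eA_0[of "{1..k}-{_}"] by simp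
  have key: "(\<Sum>j=1..k. deltaA k a \<nu> j * (\<Sum>i\<le>n. (-1)^i * ?e i * \<nu> j^(Suc n - i)))
      = (-1)^n * ?e (Suc n) * qn a (Suc n)" for n
  proof -
    have "(\<Sum>j=1..k. deltaA k a \<nu> j * (\<Sum>i\<le>n. (-1)^i * ?e i * \<nu> j^(Suc n - i)))
       = (\<Sum>j=1..k. deltaA k a \<nu> j * ((-1)^n * (?e (Suc n) - eA ({1..k}-{j}) \<nu> (Suc n))))"
      by (rule sum.cong[OF refl]) (simp only: Xlemma)
    also have "\<dots> = (-1)^n * (?e (Suc n) * (\<Sum>j=1..k. deltaA k a \<nu> j)
        - (\<Sum>j=1..k. deltaA k a \<nu> j * eA ({1..k}-{j}) \<nu> (Suc n)))"
      by (simp add: sum_distrib_left sum_subtractf algebra_simps)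
    also have "\<dots> = (-1)^n * (?e (Suc n) * qn a k - a^Suc n * qn a (k - Suc n) * ?e (Suc n))"
      unfolding sumd Ulemma[OF assms(1,3)] ..
    also have "\<dots> = (-1)^n * ?e (Suc n) * qn a (Suc n)"
    proof (cases "Suc n \<le> k")
      case True
      then have "qn a k = qn a (Suc n) + a^Suc n * qn a (k - Suc n)"
        using qn_add[of a "Suc n" "k - Suc n"] by simp
      then show ?thesis by (simp add: algebra_simps)
    next
      case False
      then have "?e (Suc n) = 0" by (intro eA_big) auto
      then show ?thesis by simp
    qed
    finally show ?thesis .
  qed
  define P where "P i = q^(i-1) * (\<Sum>j=1..k. delta k q \<nu> j * \<nu> j ^ i)" for i
  have Prec: "(\<Sum>i=0..m-1. (-q)^i * esym k \<nu> i * P (m - i)) = (-1)^(m-1) * qint q m * esym k \<nu> m"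
    if m: "m \<ge> 1" for m
  proof -
    obtain n where n: "m = Suc n" using m by (cases m) auto
    have "(\<Sum>i=0..m-1. (-q)^i * esym k \<nu> i * P (m - i))
        = (\<Sum>i\<le>n. q^n * (\<Sum>j=1..k. deltaA k a \<nu> j * ((-1)^i * ?e i * \<nu> j^(Suc n - i))))"
    proof (rule sum.cong)
      show "{0..m-1} = {..n}" using n by auto
    next
      fix i assume "i \<in> {..n}"
      then have i: "i \<le> n" by simp
      have "q^i * q^(Suc n - i - 1) = q^n" using i by (simp flip: power_add)
      then have "(-q)^i * q^(Suc n - i - 1) = (-1)^i * q^n"
        by (metis (no_types, lifting) mult.assoc power_minus)
      then have qq: "(-q)^i * q^(Suc n - i - 1) = (-1)^i * q^n" .
      define S where "S = (\<Sum>j=1..k. deltaA k a \<nu> j * \<nu> j^(Suc n - i))"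
      have "(-q)^i * esym k \<nu> i * P (m - i) = ((-q)^i * q^(Suc n - i - 1)) * (?e i * S)"
        unfolding P_def n es S_def dl by (simp only: mult.assoc mult.left_commute diff_Suc_1)
      also have "\<dots> = q^n * ((-1)^i * ?e i * S)" unfolding qq by (simp only: mult.assoc mult.left_commute)
      also have "\<dots> = q^n * (\<Sum>j=1..k. deltaA k a \<nu> j * ((-1)^i * ?e i * \<nu> j^(Suc n - i)))"
        unfolding S_def sum_distrib_left by (simp only: mult.assoc mult.left_commute)
      finally show "(-q)^i * esym k \<nu> i * P (m - i)
          = q^n * (\<Sum>j=1..k. deltaA k a \<nu> j * ((-1)^i * ?e i * \<nu> j^(Suc n - i)))" .
    qed
    also have "\<dots> = q^n * (\<Sum>j=1..k. deltaA k a \<nu> j * (\<Sum>i\<le>n. (-1)^i * ?e i * \<nu> j^(Suc n - i)))"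
    proof -
      have "(\<Sum>i\<le>n. q^n * (\<Sum>j=1..k. deltaA k a \<nu> j * ((-1)^i * ?e i * \<nu> j^(Suc n - i))))
          = q^n * (\<Sum>i\<le>n. \<Sum>j=1..k. deltaA k a \<nu> j * ((-1)^i * ?e i * \<nu> j^(Suc n - i)))"
        by (simp only: sum_distrib_left)
      also have "(\<Sum>i\<le>n. \<Sum>j=1..k. deltaA k a \<nu> j * ((-1)^i * ?e i * \<nu> j^(Suc n - i)))
          = (\<Sum>j=1..k. \<Sum>i\<le>n. deltaA k a \<nu> j * ((-1)^i * ?e i * \<nu> j^(Suc n - i)))"
        by (rule sum.swap)
      finally show ?thesis by (simp only: sum_distrib_left)
    qed
    also have "\<dots> = q^n * ((-1)^n * ?e (Suc n) * qn a (Suc n))" unfolding key ..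
    also have "\<dots> = (-1)^(m-1) * qint q m * esym k \<nu> m"
      unfolding es n qint_qn[OF assms(2), of "Suc n", simplified, folded a_def] by (simp add: mult_ac)
    finally show ?thesis .
  qed
  have eq: "p m = P m" if "m \<ge> 1" for m
    using that
  proof (induction m rule: less_induct)
    case (less m)
    have split: "(\<Sum>i=0..m-1. f i) = f 0 + (\<Sum>i=1..m-1. f i)" for f :: "nat \<Rightarrow> complex"
      by (simp add: sum.atLeast_Suc_atMost)
    have tail: "(\<Sum>i=1..m-1. (-q)^i * esym k \<nu> i * p (m - i)) = (\<Sum>i=1..m-1. (-q)^i * esym k \<nu> i * P (m - i))"
      by (rule sum.cong[OF refl]) (use less in auto)
    have e0: "esym k \<nu> 0 = 1" using es eA_0[of "{1..k}"] by simp
    show ?case using rec[OF less.prems] Prec[OF less.prems] split[of "\<lambda>i. (-q)^i * esym k \<nu> i * p (m - i)"]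
       split[of "\<lambda>i. (-q)^i * esym k \<nu> i * P (m - i)"] tail e0 by simp
  qed
  have part1: "\<forall>i\<ge>1. p i = q^(i-1) * (\<Sum>j=1..k. delta k q \<nu> j * \<nu> j ^ i)"
    using eq P_def by auto
  have "q powi (-1) = q powi (- int k) * q^(k-1)"
  proof -
    have "q powi (- int k) * q^(k-1) = q powi (- int k) * q powi (int (k-1))" by (simp only: power_int_of_nat)
    also have "\<dots> = q powi (- int k + int (k-1))" by (rule power_int_add[symmetric]) (use assms(2) in simp)
    also have "- int k + int (k-1) = -1" using assms(1) by simp
    finally show ?thesis by simp
  qed
  then have part2: "q powi (-1) * (\<Sum>j=1..k. delta k q \<nu> j) = q powi (- int k) * qint q k"
    unfolding dl sumd qint_qn[OF assms(2,1), folded a_def] by simp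
  show ?thesis using part1 part2 by blast
qed

end
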